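(* For every integer $n\ge1$, $|A_n|\le 0.21\,(3/4)^n$ and $|B_n|\le 0.85\,(3/4)^n$.
   Context: Let $x_0=-\tfrac{770766}{323285}$ and let $a_0=-x_0/10$, $a_1=-1/6$, $a_2=\tfrac{19949}{321055}$, $a_3=0$, $a_n=-\tfrac{6}{(n+5)(n-2)}\sum_{k=0}^{n-4}a_ka_{n-4-k}$ for $4\le n\le 17$. Define $A_0=1$, $A_1=A_2=A_3=0$, and $A_n=-\tfrac{12}{n(n+7)}\sum_{k=0}^{\min\{n-4,17\}}a_kA_{n-4-k}$ for $n\ge4$; define $B_0=1$, $B_1=B_2=B_3=B_7=0$, and $B_n=-\tfrac{12}{n(n-7)}\sum_{k=0}^{\min\{n-4,17\}}a_kB_{n-4-k}$ for $n\ge4$, $n\ne7$. *)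

theory Defs
  imports Complex_Main
begin

definition x0 :: real where "x0 = - 770766 / 323285"

function acoef :: "nat \<Rightarrow> real" where
  "acoef n = (if n = 0 then - x0 / 10
     else if n = 1 then - 1 / 6
     else if n = 2 then 19949 / 321055
     else if n = 3 then 0
     else if n \<le> 17 then
       - 6 / (real (n + 5) * (real n - 2)) * (\<Sum>k = 0..n - 4. acoef k * acoef (n - 4 - k))
     else 0)"
  by auto
termination by (relation "measure id") auto

function Acoef :: "nat \<Rightarrow> real" where
  "Acoef n = (if n = 0 then 1
     else if n < 4 then 0
     else - 12 / (real n * real (n + 7)) *
       (\<Sum>k = 0..min (n - 4) 17. acoef k * Acoef (n - 4 - k)))"
  by auto
termination by (relation "measure id") auto

function Bcoef :: "nat \<Rightarrow> real" where
  "Bcoef n = (if n = 0 then 1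
     else if n < 4 \<or> n = 7 then 0
     else - 12 / (real n * (real n - 7)) *
       (\<Sum>k = 0..min (n - 4) 17. acoef k * Bcoef (n - 4 - k)))"
  by auto
termination by (relation "measure id") auto

end

theory Submission
  imports Defs
begin

lemma sn: "sum f {0..numeral k} = f (numeral k) + sum f {0..pred_numeral k}"
  by (simp add: numeral_eq_Suc add.commute)

lemma a0: "acoef 0 = 385383 / 1616425"
  by (simp add: x0_def)

lemma a1: "acoef 1 = - (1 / 6)"
  by simp

lemma a1s: "acoef (Suc 0) = - (1 / 6)"
  using a1 by simp

lemma a2: "acoef 2 = 19949 / 321055"
  by simp

lemma a3: "acoef 3 = 0"
  by simp

lemma a4: "acoef 4 = - (49506685563 / 2612829780625)"
  by (subst acoef.simps) (simp add: sn a0 a1 a2 a3 a1s del: acoef.simps)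

lemma a5: "acoef 5 = 128461 / 8082125"
  by (subst acoef.simps) (simp add: sn a0 a1 a2 a3 a4 a1s del: acoef.simps)

lemma a6: "acoef 6 = - (97499792909 / 12455071881000)"
  by (subst acoef.simps) (simp add: sn a0 a1 a2 a3 a4 a5 a1s del: acoef.simps)

lemma a7: "acoef 7 = 19949 / 9631650"
  by (subst acoef.simps) (simp add: sn a0 a1 a2 a3 a4 a5 a6 a1s del: acoef.simps)

lemma a8: "acoef 8 = 90096826251431314708225793 / 226375225278394118135981078125"
  by (subst acoef.simps) (simp add: sn a0 a1 a2 a3 a4 a5 a6 a7 a1s del: acoef.simps)

lemma a9: "acoef 9 = - (544573541193 / 640143296253125)"
  by (subst acoef.simps) (simp add: sn a0 a1 a2 a3 a4 a5 a6 a7 a8 a1s del: acoef.simps)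

lemma a10: "acoef 10 = 22922081708252947 / 40265379130490850000"
  by (subst acoef.simps) (simp add: sn a0 a1 a2 a3 a4 a5 a6 a7 a8 a9 a1s del: acoef.simps)

lemma a11: "acoef 11 = - (1041035358169 / 4483825877160000)"
  by (subst acoef.simps) (simp add: sn a0 a1 a2 a3 a4 a5 a6 a7 a8 a9 a10 a1s del: acoef.simps)

lemma a12: "acoef 12 = 587214351327162310761262272254561 / 14929477799641631066244491139694687500"
  by (subst acoef.simps) (simp add: sn a0 a1 a2 a3 a4 a5 a6 a7 a8 a9 a10 a11 a1s del: acoef.simps)

lemma a13: "acoef 13 = 17538965929177365277646812 / 655296704753246131446261015625"
  by (subst acoef.simps) (simp add: sn a0 a1 a2 a3 a4 a5 a6 a7 a8 a9 a10 a11 a12 a1s del: acoef.simps)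

lemma a14: "acoef 14 = - (670831429508462862216520285639237 / 22094384977333466373836811131376250000)"
  by (subst acoef.simps) (simp add: sn a0 a1 a2 a3 a4 a5 a6 a7 a8 a9 a10 a11 a12 a13 a1s del: acoef.simps)

lemma a15: "acoef 15 = 1736688746159642627 / 102596186024490685800000"
  by (subst acoef.simps) (simp add: sn a0 a1 a2 a3 a4 a5 a6 a7 a8 a9 a10 a11 a12 a13 a14 a1s del: acoef.simps)

lemma a16: "acoef 16 = - (519267392915250281694463921122899387124577 / 91220400755640034815841071012018124215468750000)"
  by (subst acoef.simps) (simp add: sn a0 a1 a2 a3 a4 a5 a6 a7 a8 a9 a10 a11 a12 a13 a14 a15 a1s del: acoef.simps)

lemma a17: "acoef 17 = 197922898847086344857290544484657263 / 650328052952389449245610034045100587500000"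
  by (subst acoef.simps) (simp add: sn a0 a1 a2 a3 a4 a5 a6 a7 a8 a9 a10 a11 a12 a13 a14 a15 a16 a1s del: acoef.simps)

lemma A0: "Acoef 0 = 1"
  by (subst Acoef.simps) (simp add: sn a0 a1 a2 a3 a4 a5 a6 a7 a8 a9 a10 a11 a12 a13 a14 a15 a16 a17 a1s  del: Acoef.simps acoef.simps)

lemma A1: "Acoef 1 = 0"
  by (subst Acoef.simps) (simp add: sn a0 a1 a2 a3 a4 a5 a6 a7 a8 a9 a10 a11 a12 a13 a14 a15 a16 a17 a1s A0 del: Acoef.simps acoef.simps)

lemma A1s: "Acoef (Suc 0) = 0"
  using A1 by simp

lemma A2: "Acoef 2 = 0"
  by (subst Acoef.simps) (simp add: sn a0 a1 a2 a3 a4 a5 a6 a7 a8 a9 a10 a11 a12 a13 a14 a15 a16 a17 a1s A0 A1 A1s del: Acoef.simps acoef.simps)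

lemma A3: "Acoef 3 = 0"
  by (subst Acoef.simps) (simp add: sn a0 a1 a2 a3 a4 a5 a6 a7 a8 a9 a10 a11 a12 a13 a14 a15 a16 a17 a1s A0 A1 A2 A1s del: Acoef.simps acoef.simps)

lemma A4: "Acoef 4 = - (1156149 / 17780675)"
  by (subst Acoef.simps) (simp add: sn a0 a1 a2 a3 a4 a5 a6 a7 a8 a9 a10 a11 a12 a13 a14 a15 a16 a17 a1s A0 A1 A2 A3 A1s del: Acoef.simps acoef.simps)

lemma A5: "Acoef 5 = 1 / 30"
  by (subst Acoef.simps) (simp add: sn a0 a1 a2 a3 a4 a5 a6 a7 a8 a9 a10 a11 a12 a13 a14 a15 a16 a17 a1s A0 A1 A2 A3 A4 A1s del: Acoef.simps acoef.simps)

lemma A6: "Acoef 6 = - (39898 / 4173715)"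
  by (subst Acoef.simps) (simp add: sn a0 a1 a2 a3 a4 a5 a6 a7 a8 a9 a10 a11 a12 a13 a14 a15 a16 a17 a1s A0 A1 A2 A3 A4 A5 A1s del: Acoef.simps acoef.simps)

lemma A7: "Acoef 7 = 0"
  by (subst Acoef.simps) (simp add: sn a0 a1 a2 a3 a4 a5 a6 a7 a8 a9 a10 a11 a12 a13 a14 a15 a16 a17 a1s A0 A1 A2 A3 A4 A5 A6 A1s del: Acoef.simps acoef.simps)

lemma A8: "Acoef 8 = 99013371126 / 28741127586875"
  by (subst Acoef.simps) (simp add: sn a0 a1 a2 a3 a4 a5 a6 a7 a8 a9 a10 a11 a12 a13 a14 a15 a16 a17 a1s A0 A1 A2 A3 A4 A5 A6 A7 A1s del: Acoef.simps acoef.simps)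

lemma A9: "Acoef 9 = - (256922 / 88903375)"
  by (subst Acoef.simps) (simp add: sn a0 a1 a2 a3 a4 a5 a6 a7 a8 a9 a10 a11 a12 a13 a14 a15 a16 a17 a1s A0 A1 A2 A3 A4 A5 A6 A7 A8 A1s del: Acoef.simps acoef.simps)

lemma A10: "Acoef 10 = 4211108766083 / 3027827974271100"
  by (subst Acoef.simps) (simp add: sn a0 a1 a2 a3 a4 a5 a6 a7 a8 a9 a10 a11 a12 a13 a14 a15 a16 a17 a1s A0 A1 A2 A3 A4 A5 A6 A7 A8 A9 A1s del: Acoef.simps acoef.simps)

lemma A11: "Acoef 11 = - (79796 / 229554325)"
  by (subst Acoef.simps) (simp add: sn a0 a1 a2 a3 a4 a5 a6 a7 a8 a9 a10 a11 a12 a13 a14 a15 a16 a17 a1s A0 A1 A2 A3 A4 A5 A6 A7 A8 A9 A10 A1s del: Acoef.simps acoef.simps)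

lemma A12: "Acoef 12 = - (4625136396953537821110026058 / 47312422083184370690420045328125)"
  by (subst Acoef.simps) (simp add: sn a0 a1 a2 a3 a4 a5 a6 a7 a8 a9 a10 a11 a12 a13 a14 a15 a16 a17 a1s A0 A1 A2 A3 A4 A5 A6 A7 A8 A9 A10 A11 A1s del: Acoef.simps acoef.simps)

lemma A13: "Acoef 13 = 6386362437627 / 36616196545678750"
  by (subst Acoef.simps) (simp add: sn a0 a1 a2 a3 a4 a5 a6 a7 a8 a9 a10 a11 a12 a13 a14 a15 a16 a17 a1s A0 A1 A2 A3 A4 A5 A6 A7 A8 A9 A10 A11 A12 A1s del: Acoef.simps acoef.simps)

lemma A14: "Acoef 14 = - (7877017633650459233 / 68519595666356279445000)"
  by (subst Acoef.simps) (simp add: sn a0 a1 a2 a3 a4 a5 a6 a7 a8 a9 a10 a11 a12 a13 a14 a15 a16 a17 a1s A0 A1 A2 A3 A4 A5 A6 A7 A8 A9 A10 A11 A12 A13 A1s del: Acoef.simps acoef.simps)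

lemma A15: "Acoef 15 = 50496442407137 / 1090018070737596000"
  by (subst Acoef.simps) (simp add: sn a0 a1 a2 a3 a4 a5 a6 a7 a8 a9 a10 a11 a12 a13 a14 a15 a16 a17 a1s A0 A1 A2 A3 A4 A5 A6 A7 A8 A9 A10 A11 A12 A13 A14 A1s del: Acoef.simps acoef.simps)

lemma A16: "Acoef 16 = - (178103694194663331107316628824406729 / 25630714208170471619799024610182986718750)"
  by (subst Acoef.simps) (simp add: sn a0 a1 a2 a3 a4 a5 a6 a7 a8 a9 a10 a11 a12 a13 a14 a15 a16 a17 a1s A0 A1 A2 A3 A4 A5 A6 A7 A8 A9 A10 A11 A12 A13 A14 A15 A1s del: Acoef.simps acoef.simps)

lemma A17: "Acoef 17 = - (26180020111704468732088174197 / 4021555877070671508685703852890625)"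
  by (subst Acoef.simps) (simp add: sn a0 a1 a2 a3 a4 a5 a6 a7 a8 a9 a10 a11 a12 a13 a14 a15 a16 a17 a1s A0 A1 A2 A3 A4 A5 A6 A7 A8 A9 A10 A11 A12 A13 A14 A15 A16 A1s del: Acoef.simps acoef.simps)

lemma A18: "Acoef 18 = 425369590878259945552378762956507 / 61035738499883700857724190750426890625"
  by (subst Acoef.simps) (simp add: sn a0 a1 a2 a3 a4 a5 a6 a7 a8 a9 a10 a11 a12 a13 a14 a15 a16 a17 a1s A0 A1 A2 A3 A4 A5 A6 A7 A8 A9 A10 A11 A12 A13 A14 A15 A16 A17 A1s del: Acoef.simps acoef.simps)

lemma A19: "Acoef 19 = - (1521645742924447558531 / 394901269690433357201350000)"
  by (subst Acoef.simps) (simp add: sn a0 a1 a2 a3 a4 a5 a6 a7 a8 a9 a10 a11 a12 a13 a14 a15 a16 a17 a1s A0 A1 A2 A3 A4 A5 A6 A7 A8 A9 A10 A11 A12 A13 A14 A15 A16 A17 A18 A1s del: Acoef.simps acoef.simps)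

lemma A20: "Acoef 20 = 98962219557312803810521212152801342452749257 / 77954927365753181752844093929737088551779250000000"
  by (subst Acoef.simps) (simp add: sn a0 a1 a2 a3 a4 a5 a6 a7 a8 a9 a10 a11 a12 a13 a14 a15 a16 a17 a1s A0 A1 A2 A3 A4 A5 A6 A7 A8 A9 A10 A11 A12 A13 A14 A15 A16 A17 A18 A19 A1s del: Acoef.simps acoef.simps)

lemma A21: "Acoef 21 = - (28002770843700773470553181256594409089 / 1105196396656310736245733941191090387312500000)"
  by (subst Acoef.simps) (simp add: sn a0 a1 a2 a3 a4 a5 a6 a7 a8 a9 a10 a11 a12 a13 a14 a15 a16 a17 a1s A0 A1 A2 A3 A4 A5 A6 A7 A8 A9 A10 A11 A12 A13 A14 A15 A16 A17 A18 A19 A20 A1s del: Acoef.simps acoef.simps)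

lemma B0: "Bcoef 0 = 1"
  by (subst Bcoef.simps) (simp add: sn a0 a1 a2 a3 a4 a5 a6 a7 a8 a9 a10 a11 a12 a13 a14 a15 a16 a17 a1s  del: Bcoef.simps acoef.simps)

lemma B1: "Bcoef 1 = 0"
  by (subst Bcoef.simps) (simp add: sn a0 a1 a2 a3 a4 a5 a6 a7 a8 a9 a10 a11 a12 a13 a14 a15 a16 a17 a1s B0 del: Bcoef.simps acoef.simps)

lemma B1s: "Bcoef (Suc 0) = 0"
  using B1 by simp

lemma B2: "Bcoef 2 = 0"
  by (subst Bcoef.simps) (simp add: sn a0 a1 a2 a3 a4 a5 a6 a7 a8 a9 a10 a11 a12 a13 a14 a15 a16 a17 a1s B0 B1 B1s del: Bcoef.simps acoef.simps)

lemma B3: "Bcoef 3 = 0"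
  by (subst Bcoef.simps) (simp add: sn a0 a1 a2 a3 a4 a5 a6 a7 a8 a9 a10 a11 a12 a13 a14 a15 a16 a17 a1s B0 B1 B2 B1s del: Bcoef.simps acoef.simps)

lemma B4: "Bcoef 4 = 385383 / 1616425"
  by (subst Bcoef.simps) (simp add: sn a0 a1 a2 a3 a4 a5 a6 a7 a8 a9 a10 a11 a12 a13 a14 a15 a16 a17 a1s B0 B1 B2 B3 B1s del: Bcoef.simps acoef.simps)

lemma B5: "Bcoef 5 = - (1 / 5)"
  by (subst Bcoef.simps) (simp add: sn a0 a1 a2 a3 a4 a5 a6 a7 a8 a9 a10 a11 a12 a13 a14 a15 a16 a17 a1s B0 B1 B2 B3 B4 B1s del: Bcoef.simps acoef.simps)

lemma B6: "Bcoef 6 = 39898 / 321055"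
  by (subst Bcoef.simps) (simp add: sn a0 a1 a2 a3 a4 a5 a6 a7 a8 a9 a10 a11 a12 a13 a14 a15 a16 a17 a1s B0 B1 B2 B3 B4 B5 B1s del: Bcoef.simps acoef.simps)

lemma B7: "Bcoef 7 = 0"
  by (subst Bcoef.simps) (simp add: sn a0 a1 a2 a3 a4 a5 a6 a7 a8 a9 a10 a11 a12 a13 a14 a15 a16 a17 a1s B0 B1 B2 B3 B4 B5 B6 B1s del: Bcoef.simps acoef.simps)

lemma B8: "Bcoef 8 = - (148520056689 / 2612829780625)"
  by (subst Bcoef.simps) (simp add: sn a0 a1 a2 a3 a4 a5 a6 a7 a8 a9 a10 a11 a12 a13 a14 a15 a16 a17 a1s B0 B1 B2 B3 B4 B5 B6 B7 B1s del: Bcoef.simps acoef.simps)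

lemma B9: "Bcoef 9 = 385383 / 8082125"
  by (subst Bcoef.simps) (simp add: sn a0 a1 a2 a3 a4 a5 a6 a7 a8 a9 a10 a11 a12 a13 a14 a15 a16 a17 a1s B0 B1 B2 B3 B4 B5 B6 B7 B8 B1s del: Bcoef.simps acoef.simps)

lemma B10: "Bcoef 10 = - (58080377561 / 2075845313500)"
  by (subst Bcoef.simps) (simp add: sn a0 a1 a2 a3 a4 a5 a6 a7 a8 a9 a10 a11 a12 a13 a14 a15 a16 a17 a1s B0 B1 B2 B3 B4 B5 B6 B7 B8 B9 B1s del: Bcoef.simps acoef.simps)

lemma B11: "Bcoef 11 = 59847 / 7063210"
  by (subst Bcoef.simps) (simp add: sn a0 a1 a2 a3 a4 a5 a6 a7 a8 a9 a10 a11 a12 a13 a14 a15 a16 a17 a1s B0 B1 B2 B3 B4 B5 B6 B7 B8 B9 B10 B1s del: Bcoef.simps acoef.simps)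

lemma B12: "Bcoef 12 = 90096826251431314708225793 / 45275045055678823627196215625"
  by (subst Bcoef.simps) (simp add: sn a0 a1 a2 a3 a4 a5 a6 a7 a8 a9 a10 a11 a12 a13 a14 a15 a16 a17 a1s B0 B1 B2 B3 B4 B5 B6 B7 B8 B9 B10 B11 B1s del: Bcoef.simps acoef.simps)

lemma B13: "Bcoef 13 = - (35298266806419 / 8321862851290625)"
  by (subst Bcoef.simps) (simp add: sn a0 a1 a2 a3 a4 a5 a6 a7 a8 a9 a10 a11 a12 a13 a14 a15 a16 a17 a1s B0 B1 B2 B3 B4 B5 B6 B7 B8 B9 B10 B11 B12 B1s del: Bcoef.simps acoef.simps)

lemma B14: "Bcoef 14 = 143692761597812009 / 46976275652239325000"
  by (subst Bcoef.simps) (simp add: sn a0 a1 a2 a3 a4 a5 a6 a7 a8 a9 a10 a11 a12 a13 a14 a15 a16 a17 a1s B0 B1 B2 B3 B4 B5 B6 B7 B8 B9 B10 B11 B12 B13 B1s del: Bcoef.simps acoef.simps)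

lemma B15: "Bcoef 15 = - (132662981510393 / 98644169297520000)"
  by (subst Bcoef.simps) (simp add: sn a0 a1 a2 a3 a4 a5 a6 a7 a8 a9 a10 a11 a12 a13 a14 a15 a16 a17 a1s B0 B1 B2 B3 B4 B5 B6 B7 B8 B9 B10 B11 B12 B13 B14 B1s del: Bcoef.simps acoef.simps)

lemma B16: "Bcoef 16 = 265517965632035667411880944185901 / 1117171808136448583188363282562187500"
  by (subst Bcoef.simps) (simp add: sn a0 a1 a2 a3 a4 a5 a6 a7 a8 a9 a10 a11 a12 a13 a14 a15 a16 a17 a1s B0 B1 B2 B3 B4 B5 B6 B7 B8 B9 B10 B11 B12 B13 B14 B15 B1s del: Bcoef.simps acoef.simps)

lemma B17: "Bcoef 17 = 1566803839421841981067679898 / 8466433425411940018285692321875"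
  by (subst Bcoef.simps) (simp add: sn a0 a1 a2 a3 a4 a5 a6 a7 a8 a9 a10 a11 a12 a13 a14 a15 a16 a17 a1s B0 B1 B2 B3 B4 B5 B6 B7 B8 B9 B10 B11 B12 B13 B14 B15 B16 B1s del: Bcoef.simps acoef.simps)

lemma B18: "Bcoef 18 = - (3330579293236432939105859073744586 / 15189889671916758132012807652821171875)"
  by (subst Bcoef.simps) (simp add: sn a0 a1 a2 a3 a4 a5 a6 a7 a8 a9 a10 a11 a12 a13 a14 a15 a16 a17 a1s B0 B1 B2 B3 B4 B5 B6 B7 B8 B9 B10 B11 B12 B13 B14 B15 B16 B17 B1s del: Bcoef.simps acoef.simps)

lemma B19: "Bcoef 19 = 27630060029148815277667 / 214426028791185533322000000"
  by (subst Bcoef.simps) (simp add: sn a0 a1 a2 a3 a4 a5 a6 a7 a8 a9 a10 a11 a12 a13 a14 a15 a16 a17 a1s B0 B1 B2 B3 B4 B5 B6 B7 B8 B9 B10 B11 B12 B13 B14 B15 B16 B17 B18 B1s del: Bcoef.simps acoef.simps)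

lemma B20: "Bcoef 20 = - (81004092840052338435903308988363079251034927 / 1783865614776960680843114277568354429102500000000)"
  by (subst Bcoef.simps) (simp add: sn a0 a1 a2 a3 a4 a5 a6 a7 a8 a9 a10 a11 a12 a13 a14 a15 a16 a17 a1s B0 B1 B2 B3 B4 B5 B6 B7 B8 B9 B10 B11 B12 B13 B14 B15 B16 B17 B18 B19 B1s del: Bcoef.simps acoef.simps)

lemma B21: "Bcoef 21 = 20079848652633752895821194581212683721 / 9104592741333452289438540476631408225000000"
  by (subst Bcoef.simps) (simp add: sn a0 a1 a2 a3 a4 a5 a6 a7 a8 a9 a10 a11 a12 a13 a14 a15 a16 a17 a1s B0 B1 B2 B3 B4 B5 B6 B7 B8 B9 B10 B11 B12 B13 B14 B15 B16 B17 B18 B19 B20 B1s del: Bcoef.simps acoef.simps)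

lemma Ssum: "(\<Sum>k=0..17. \<bar>acoef k\<bar> * (4/3::real)^(k+4)) \<le> 3"
  by (simp add: power_divide sn a1s a0 a1 a2 a3 a4 a5 a6 a7 a8 a9 a10 a11 a12 a13 a14 a15 a16 a17 del: acoef.simps)

lemma tail:
  fixes F :: "nat \<Rightarrow> real" and c d :: real
  assumes n: "n \<ge> 22" and c: "c \<ge> 0"
    and IH: "\<And>m. 1 \<le> m \<Longrightarrow> m < n \<Longrightarrow> \<bar>F m\<bar> \<le> c * (3/4)^m"
    and d: "d \<ge> 36"
    and eq: "F n = - 12 / d * (\<Sum>k=0..17. acoef k * F (n-4-k))"
  shows "\<bar>F n\<bar> \<le> c * (3/4)^n"
proof -
  have each: "\<bar>acoef k * F (n-4-k)\<bar> \<le> \<bar>acoef k\<bar> * (4/3)^(k+4) * (c * (3/4)^n)"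
    if k: "k \<in> {0..17}" for k
  proof -
    from k n have m1: "1 \<le> n-4-k" "n-4-k < n" by auto
    have pw: "(3/4::real)^n = (3/4)^(n-4-k) * (3/4)^(k+4)"
      using k n by (simp add: power_add[symmetric])
    have "(4/3::real)^(k+4) * (3/4)^(k+4) = ((4/3) * (3/4))^(k+4)"
      by (rule power_mult_distrib[symmetric])
    also have "\<dots> = 1" by simp
    finally have one: "(4/3::real)^(k+4) * (3/4)^(k+4) = 1" .
    have r: "(3/4::real)^(n-4-k) = (4/3)^(k+4) * (3/4)^n"
    proof -
      have "(4/3::real)^(k+4) * (3/4)^n = (3/4)^(n-4-k) * ((4/3)^(k+4) * (3/4)^(k+4))"
        unfolding pw by (simp only: mult_ac)
      also have "\<dots> = (3/4)^(n-4-k)" unfolding one by simp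
      finally show ?thesis by (rule sym)
    qed
    have "\<bar>F (n-4-k)\<bar> \<le> c * ((4/3)^(k+4) * (3/4)^n)" using IH[OF m1] r by simp
    hence "\<bar>acoef k\<bar> * \<bar>F (n-4-k)\<bar> \<le> \<bar>acoef k\<bar> * (c * ((4/3)^(k+4) * (3/4)^n))"
      by (simp add: mult_left_mono)
    thus ?thesis by (simp add: abs_mult algebra_simps)
  qed
  have "\<bar>\<Sum>k=0..17. acoef k * F (n-4-k)\<bar> \<le> (\<Sum>k=0..17. \<bar>acoef k * F (n-4-k)\<bar>)"
    by (rule sum_abs)
  also have "\<dots> \<le> (\<Sum>k=0..17. \<bar>acoef k\<bar> * (4/3)^(k+4) * (c * (3/4)^n))"
    by (rule sum_mono) (rule each)
  also have "\<dots> = (\<Sum>k=0..17. \<bar>acoef k\<bar> * (4/3)^(k+4)) * (c * (3/4)^n)"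
    by (simp add: sum_distrib_right)
  also have "\<dots> \<le> 3 * (c * (3/4)^n)"
    by (rule mult_right_mono[OF Ssum]) (simp add: c)
  finally have s: "\<bar>\<Sum>k=0..17. acoef k * F (n-4-k)\<bar> \<le> 3 * (c * (3/4)^n)" .
  have "\<bar>F n\<bar> = 12 / d * \<bar>\<Sum>k=0..17. acoef k * F (n-4-k)\<bar>"
    using eq d by (simp add: abs_mult)
  also have "\<dots> \<le> 12 / d * (3 * (c * (3/4)^n))"
    by (rule mult_left_mono[OF s]) (use d in simp)
  also have "\<dots> \<le> c * (3/4)^n"
  proof -
    have "12 / d * 3 \<le> 1" using d by (simp add: field_simps)
    moreover have "0 \<le> c * (3/4::real)^n" using c by simp
    moreover have "0 \<le> 12 / d * 3" using d by simp
    ultimately have "(12 / d * 3) * (c * (3/4::real)^n) \<le> c * (3/4)^n"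
      by (intro mult_left_le_one_le)
    thus ?thesis by (simp only: mult.assoc)
  qed
  finally show ?thesis .
qed

lemma Abound: "n \<ge> 1 \<Longrightarrow> \<bar>Acoef n\<bar> \<le> 21 / 100 * (3 / 4) ^ n"
proof (induction n rule: less_induct)
  case (less n)
  show ?case
  proof (cases "n \<le> 21")
    case True
    have "n = 1 \<or> n = 2 \<or> n = 3 \<or> n = 4 \<or> n = 5 \<or> n = 6 \<or> n = 7 \<or> n = 8 \<or> n = 9 \<or> n = 10 \<or> n = 11 \<or> n = 12 \<or> n = 13 \<or> n = 14 \<or> n = 15 \<or> n = 16 \<or> n = 17 \<or> n = 18 \<or> n = 19 \<or> n = 20 \<or> n = 21" using True less.prems by presburger
    then show ?thesis
      by (elim disjE) (simp_all add: power_divide A1s A1 A2 A3 A4 A5 A6 A7 A8 A9 A10 A11 A12 A13 A14 A15 A16 A17 A18 A19 A20 A21 del: Acoef.simps)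
  next
    case False
    show ?thesis
    proof (rule tail[where d = "real n * real (n + 7)"])
      show "22 \<le> n" using False by simp
      show "\<And>m. 1 \<le> m \<Longrightarrow> m < n \<Longrightarrow> \<bar>Acoef m\<bar> \<le> 21 / 100 * (3 / 4) ^ m" by (rule less.IH)
      have "(22::real) * 29 \<le> real n * real (n+7)"
        using False by (intro mult_mono) auto
      thus "36 \<le> real n * real (n + 7)" by simp
      have "min (n-4) 17 = 17" using False by simp
      thus "Acoef n = - 12 / (real n * real (n + 7)) * (\<Sum>k = 0..17. acoef k * Acoef (n - 4 - k))"
        using False by (subst Acoef.simps) (simp del: Acoef.simps)
    qed simp
  qed
qed

lemma Bbound: "n \<ge> 1 \<Longrightarrow> \<bar>Bcoef n\<bar> \<le> 85 / 100 * (3 / 4) ^ n"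
proof (induction n rule: less_induct)
  case (less n)
  show ?case
  proof (cases "n \<le> 21")
    case True
    have "n = 1 \<or> n = 2 \<or> n = 3 \<or> n = 4 \<or> n = 5 \<or> n = 6 \<or> n = 7 \<or> n = 8 \<or> n = 9 \<or> n = 10 \<or> n = 11 \<or> n = 12 \<or> n = 13 \<or> n = 14 \<or> n = 15 \<or> n = 16 \<or> n = 17 \<or> n = 18 \<or> n = 19 \<or> n = 20 \<or> n = 21" using True less.prems by presburger
    then show ?thesis
      by (elim disjE) (simp_all add: power_divide B1s B1 B2 B3 B4 B5 B6 B7 B8 B9 B10 B11 B12 B13 B14 B15 B16 B17 B18 B19 B20 B21 del: Bcoef.simps)
  next
    case False
    show ?thesis
    proof (rule tail[where d = "real n * (real n - 7)"])
      show "22 \<le> n" using False by simp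
      show "\<And>m. 1 \<le> m \<Longrightarrow> m < n \<Longrightarrow> \<bar>Bcoef m\<bar> \<le> 85 / 100 * (3 / 4) ^ m" by (rule less.IH)
      have "(22::real) * 15 \<le> real n * (real n - 7)"
        using False by (intro mult_mono) auto
      thus "36 \<le> real n * (real n - 7)" by simp
      have "min (n-4) 17 = 17" using False by simp
      thus "Bcoef n = - 12 / (real n * (real n - 7)) * (\<Sum>k = 0..17. acoef k * Bcoef (n - 4 - k))"
        using False by (subst Bcoef.simps) (simp del: Bcoef.simps)
    qed simp
  qed
qed

theorem lemma6p5:
  fixes n :: nat
  assumes "n \<ge> 1"
  shows "\<bar>Acoef n\<bar> \<le> 21 / 100 * (3 / 4) ^ n \<and> \<bar>Bcoef n\<bar> \<le> 85 / 100 * (3 / 4) ^ n"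
  using Abound[OF assms] Bbound[OF assms] by (rule conjI)

end
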